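(* Let $\mathcal{G}$ be the real Lie algebra with basis $X_1,X_2,X_3$ and brackets $[X_1,X_2]=0$, $[X_2,X_3]=X_1$, $[X_3,X_1]=X_2$ (Bianchi type $VII_0$). Every real Manin triple $(\mathcal{D},\mathcal{G}',\tilde{\mathcal{G}}')$ with $\mathcal{G}'\cong\mathcal{G}$ is isomorphic to exactly one Manin triple $(\mathcal{D},\mathcal{G},\tilde{\mathcal{G}})$ in which $\tilde{\mathcal{G}}$, in the basis $\tilde X^1,\tilde X^2,\tilde X^3$ dual to $X_1,X_2,X_3$, has one of the following bracket structures: (a) (Bianchi $I$) all brackets zero; (b) (Bianchi $II$) (i) $[\tilde X^1,\tilde X^2]=\tilde X^3$, $[\tilde X^2,\tilde X^3]=0$, $[\tilde X^3,\tilde X^1]=0$; (ii) $[\tilde X^1,\tilde X^2]=-\tilde X^3$, $[\tilde X^2,\tilde X^3]=0$, $[\tilde X^3,\tilde X^1]=0$; (c) (Bianchi $IV$) $[\tilde X^1,\tilde X^2]=b(-\tilde X^2+\tilde X^3)$, $[\tilde X^2,\tilde X^3]=0$, $[\tilde X^3,\tilde X^1]=b\tilde X^3$, $b\in\mathbb{R}\setminus\{0\}$; (d) (Bianchi $V$) (i) $[\tilde X^1,\tilde X^2]=-\tilde X^2$, $[\tilde X^2,\tilde X^3]=0$, $[\tilde X^3,\tilde X^1]=\tilde X^3$; (ii) $[\tilde X^1,\tilde X^2]=0$, $[\tilde X^2,\tilde X^3]=b\tilde X^2$, $[\tilde X^3,\tilde X^1]=-b\tilde X^1$, $b>0$.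
   Context: A real Manin triple $(\mathcal{D},\mathcal{G},\tilde{\mathcal{G}})$ consists of a real Lie algebra $\mathcal{D}$ with a symmetric, ad-invariant, nondegenerate bilinear form $\langle\cdot,\cdot\rangle$, and two maximally isotropic Lie subalgebras $\mathcal{G},\tilde{\mathcal{G}}$ with $\mathcal{D}=\mathcal{G}\oplus\tilde{\mathcal{G}}$ as vector spaces; here $\dim\mathcal{D}=6$, $\dim\mathcal{G}=\dim\tilde{\mathcal{G}}=3$. Bases $X_i$ of $\mathcal{G}$ and $\tilde X^i$ of $\tilde{\mathcal{G}}$ are dual if $\langle X_i,X_j\rangle=0$, $\langle X_i,\tilde X^j\rangle=\delta_i^j$, $\langle\tilde X^i,\tilde X^j\rangle=0$. If $[X_i,X_j]=f_{ij}{}^kX_k$ and $[\tilde X^i,\tilde X^j]=\tilde f^{ij}{}_k\tilde X^k$, ad-invariance forces $[X_i,\tilde X^j]=f_{ki}{}^j\tilde X^k+\tilde f^{jk}{}_iX_k$, so the triple is determined by the brackets of $\mathcal{G}$ and $\tilde{\mathcal{G}}$ in dual bases. Two Manin triples are isomorphic if there is a Lie algebra isomorphism of the doubles preserving the bilinear forms and mapping first subalgebra to first subalgebra and second to second; equivalently, they are related by a change of basis $X_i'=X_kA^k{}_i$, $\tilde X'^j=(A^{-1})^j{}_k\tilde X^k$. Different values of the parameter $b$ give non-isomorphic triples. *)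

theory Defs
  imports "HOL-Analysis.Analysis"
begin

text \<open>Structure constants w.r.t. a basis indexed by the type 3 (labels 1,2,3):
  sc i j k is the coefficient of the k-th basis vector in the bracket of the
  i-th and j-th basis vectors.\<close>
type_synonym sc = "3 \<Rightarrow> 3 \<Rightarrow> 3 \<Rightarrow> real"

definition sc_of :: "real^3 \<Rightarrow> real^3 \<Rightarrow> real^3 \<Rightarrow> sc" where
  "sc_of c12 c23 c31 = (\<lambda>i j k.
     if i = 1 \<and> j = 2 then c12 $ k else if i = 2 \<and> j = 1 then - c12 $ k
     else if i = 2 \<and> j = 3 then c23 $ k else if i = 3 \<and> j = 2 then - c23 $ k
     else if i = 3 \<and> j = 1 then c31 $ k else if i = 1 \<and> j = 3 then - c31 $ k
     else 0)"

definition brG :: "sc \<Rightarrow> real^3 \<Rightarrow> real^3 \<Rightarrow> real^3" where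
  "brG f x y = (\<chi> k. \<Sum>i\<in>UNIV. \<Sum>j\<in>UNIV. x $ i * y $ j * f i j k)"

text \<open>Elements of the double D = G + G~ in coordinates (x, xi) meaning
  x_i X_i + xi_i X~^i, with X_i, X~^i dual bases.  The bracket is
  [X_i,X_j] = f_ij^k X_k, [X~^i,X~^j] = ft^ij_k X~^k,
  [X_i,X~^j] = f_ki^j X~^k + ft^jk_i X_k (and [X~^j,X_i] = -[X_i,X~^j]).\<close>
definition dbr :: "sc \<Rightarrow> sc \<Rightarrow> ((real^3) \<times> (real^3)) \<Rightarrow> ((real^3) \<times> (real^3)) \<Rightarrow> ((real^3) \<times> (real^3))" where
  "dbr f ft u v = (let x = fst u; xi = snd u; y = fst v; eta = snd v in
     ((\<chi> k. (\<Sum>i\<in>UNIV. \<Sum>j\<in>UNIV. x $ i * y $ j * f i j k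
                + x $ i * eta $ j * ft j k i - xi $ i * y $ j * ft i k j)),
      (\<chi> k. (\<Sum>i\<in>UNIV. \<Sum>j\<in>UNIV. xi $ i * eta $ j * ft i j k
                + x $ i * eta $ j * f k i j - xi $ i * y $ j * f k j i))))"

definition dform :: "((real^3) \<times> (real^3)) \<Rightarrow> ((real^3) \<times> (real^3)) \<Rightarrow> real" where
  "dform u v = fst u \<bullet> snd v + snd u \<bullet> fst v"

text \<open>(f, ft) defines a Manin triple: the double with bracket dbr is a Lie algebra
  (alternating, Jacobi; bilinearity is automatic) and the form is ad-invariant
  (symmetry, nondegeneracy, maximal isotropy of both summands are automatic).
  Then G = span X_i and G~ = span X~^i are subalgebras with brackets f, ft.\<close>
definition manin_triple :: "sc \<Rightarrow> sc \<Rightarrow> bool" where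
  "manin_triple f ft \<longleftrightarrow>
     (\<forall>u. dbr f ft u u = 0) \<and>
     (\<forall>u v w. dbr f ft u (dbr f ft v w) + dbr f ft v (dbr f ft w u)
              + dbr f ft w (dbr f ft u v) = 0) \<and>
     (\<forall>u v w. dform (dbr f ft u v) w = dform u (dbr f ft v w))"

definition Gpart :: "((real^3) \<times> (real^3)) set" where
  "Gpart = {(x, 0) | x. True}"

definition Gtpart :: "((real^3) \<times> (real^3)) set" where
  "Gtpart = {(0, xi) | xi. True}"

definition manin_iso :: "sc \<Rightarrow> sc \<Rightarrow> sc \<Rightarrow> sc \<Rightarrow> bool" where
  "manin_iso f1 ft1 f2 ft2 \<longleftrightarrow>
     (\<exists>\<Phi> :: ((real^3) \<times> (real^3)) \<Rightarrow> ((real^3) \<times> (real^3)).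
        linear \<Phi> \<and> bij \<Phi> \<and>
        (\<forall>u v. \<Phi> (dbr f1 ft1 u v) = dbr f2 ft2 (\<Phi> u) (\<Phi> v)) \<and>
        (\<forall>u v. dform (\<Phi> u) (\<Phi> v) = dform u v) \<and>
        \<Phi> ` Gpart = Gpart \<and> \<Phi> ` Gtpart = Gtpart)"

definition lie_iso :: "sc \<Rightarrow> sc \<Rightarrow> bool" where
  "lie_iso f1 f2 \<longleftrightarrow>
     (\<exists>\<phi> :: real^3 \<Rightarrow> real^3. linear \<phi> \<and> bij \<phi> \<and>
        (\<forall>x y. \<phi> (brG f1 x y) = brG f2 (\<phi> x) (\<phi> y)))"

definition f_VII0 :: sc where
  "f_VII0 = sc_of (vector [0, 0, 0]) (vector [1, 0, 0]) (vector [0, 1, 0])"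

datatype dual_label = BI | BII_i | BII_ii | BIV | BV_i | BV_ii

text \<open>Admissible parameter values; b is irrelevant (fixed to 0) except for IV and V(ii).\<close>
fun valid_param :: "dual_label \<Rightarrow> real \<Rightarrow> bool" where
  "valid_param BIV b = (b \<noteq> 0)"
| "valid_param BV_ii b = (b > 0)"
| "valid_param _ b = (b = 0)"

text \<open>Structure constants of G~ in the dual basis:
  arguments of sc_of are [X~1,X~2], [X~2,X~3], [X~3,X~1].\<close>
fun dual_sc :: "dual_label \<Rightarrow> real \<Rightarrow> sc" where
  "dual_sc BI b = sc_of 0 0 0"
| "dual_sc BII_i b = sc_of (vector [0, 0, 1]) 0 0"
| "dual_sc BII_ii b = sc_of (vector [0, 0, -1]) 0 0"
| "dual_sc BIV b = sc_of (vector [0, -b, b]) 0 (vector [0, 0, b])"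
| "dual_sc BV_i b = sc_of (vector [0, -1, 0]) 0 (vector [0, 0, 1])"
| "dual_sc BV_ii b = sc_of 0 (vector [0, b, 0]) (vector [-b, 0, 0])"

end

theory Submission
  imports Defs
begin


lemma dbr_fst_inner:
  "fst (dbr f ft (x,xi) (y,eta)) \<bullet> z = brG f x y \<bullet> z + x \<bullet> brG ft eta z - y \<bullet> brG ft xi z"
  by (simp add: dbr_def brG_def inner_vec_def sum_3 algebra_simps)

lemma dbr_snd_inner:
  "snd (dbr f ft (x,xi) (y,eta)) \<bullet> z = brG ft xi eta \<bullet> z + eta \<bullet> brG f z x - xi \<bullet> brG f z y"
  by (simp add: dbr_def brG_def inner_vec_def sum_3 algebra_simps)

lemma pair_inj1:
  fixes C D :: "real^3 \<Rightarrow> real^3"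
  assumes "\<forall>x y. C x \<bullet> D y = x \<bullet> y"
  shows "inj C"
proof (rule injI)
  fix x x' assume "C x = C x'"
  then have "\<forall>y. x \<bullet> y = x' \<bullet> y" using assms by metis
  then show "x = x'" using vector_eq_rdot by blast
qed

lemma pair_inj2:
  fixes C D :: "real^3 \<Rightarrow> real^3"
  assumes "\<forall>x y. C x \<bullet> D y = x \<bullet> y"
  shows "inj D"
proof (rule injI)
  fix x x' assume "D x = D x'"
  then have "\<forall>y. y \<bullet> x = y \<bullet> x'" using assms by metis
  then show "x = x'" using vector_eq_ldot by blast
qed

lemma lin_surj:
  fixes C :: "real^3 \<Rightarrow> real^3"
  assumes "linear C" "inj C" shows "surj C"
  using eucl.linear_injective_imp_surjective[OF assms] by simp

lemma iso_CD:
  fixes C D :: "real^3 \<Rightarrow> real^3"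
  assumes lC: "linear C" and lD: "linear D" and pr: "\<forall>x y. C x \<bullet> D y = x \<bullet> y"
    and hf: "\<forall>x y. C (brG f x y) = brG f0 (C x) (C y)"
    and hg: "\<forall>x y. D (brG g x y) = brG g0 (D x) (D y)"
  shows "manin_iso f g f0 g0"
proof -
  have pr2: "\<forall>x y. D y \<bullet> C x = y \<bullet> x" using pr by (simp add: inner_commute)
  have iC: "inj C" and iD: "inj D" using pair_inj1[OF pr] pair_inj2[OF pr] .
  have sC: "surj C" and sD: "surj D" using lin_surj lC lD iC iD by auto
  define P where "P = (\<lambda>u::(real^3)\<times>(real^3). (C (fst u), D (snd u)))"
  have linP: "linear P" unfolding P_def
    using lC lD by (auto intro!: linearI simp: linear_add linear_cmul)
  have injP: "inj P" unfolding P_def using iC iD by (auto intro!: injI simp: inj_eq prod_eq_iff)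
  have surjP: "surj P"
  proof -
    { fix a b
      obtain x where "a = C x" using sC by blast
      moreover obtain y where "b = D y" using sD by blast
      ultimately have "\<exists>u. (a,b) = P u" unfolding P_def by auto }
    then show ?thesis by (metis surj_def surj_pair)
  qed
  have br: "P (dbr f g u v) = dbr f0 g0 (P u) (P v)" for u v
  proof -
    obtain x xi where u: "u = (x,xi)" by fastforce
    obtain y eta where v: "v = (y,eta)" by fastforce
    have 1: "C (fst (dbr f g (x,xi) (y,eta))) = fst (dbr f0 g0 (C x, D xi) (C y, D eta))"
    proof -
      { fix z' obtain z where z: "z' = D z" using sD by blast
        have "C (fst (dbr f g (x,xi) (y,eta))) \<bullet> z' = fst (dbr f g (x,xi) (y,eta)) \<bullet> z"
          using pr z by simp
        also have "\<dots> = brG f x y \<bullet> z + x \<bullet> brG g eta z - y \<bullet> brG g xi z"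
          by (rule dbr_fst_inner)
        also have "\<dots> = C (brG f x y) \<bullet> D z + C x \<bullet> D (brG g eta z) - C y \<bullet> D (brG g xi z)"
          using pr by simp
        also have "\<dots> = fst (dbr f0 g0 (C x, D xi) (C y, D eta)) \<bullet> z'"
          using hf hg z by (simp add: dbr_fst_inner)
        finally have "C (fst (dbr f g (x,xi) (y,eta))) \<bullet> z' = fst (dbr f0 g0 (C x, D xi) (C y, D eta)) \<bullet> z'" . }
      then show ?thesis using vector_eq_rdot by blast
    qed
    have 2: "D (snd (dbr f g (x,xi) (y,eta))) = snd (dbr f0 g0 (C x, D xi) (C y, D eta))"
    proof -
      { fix z' obtain z where z: "z' = C z" using sC by blast
        have "D (snd (dbr f g (x,xi) (y,eta))) \<bullet> z' = snd (dbr f g (x,xi) (y,eta)) \<bullet> z"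
          using pr z by (simp add: inner_commute)
        also have "\<dots> = brG g xi eta \<bullet> z + eta \<bullet> brG f z x - xi \<bullet> brG f z y"
          by (rule dbr_snd_inner)
        also have "\<dots> = D (brG g xi eta) \<bullet> C z + D eta \<bullet> C (brG f z x) - D xi \<bullet> C (brG f z y)"
          using pr2 by simp
        also have "\<dots> = snd (dbr f0 g0 (C x, D xi) (C y, D eta)) \<bullet> z'"
          using hf hg z by (simp add: dbr_snd_inner)
        finally have "D (snd (dbr f g (x,xi) (y,eta))) \<bullet> z' = snd (dbr f0 g0 (C x, D xi) (C y, D eta)) \<bullet> z'" . }
      then show ?thesis using vector_eq_rdot by blast
    qed
    show ?thesis using 1 2 unfolding u v P_def by (simp add: prod_eq_iff)
  qed
  have fm: "dform (P u) (P v) = dform u v" for u v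
    unfolding P_def dform_def using pr by (simp add: inner_commute)
  have lin0C: "C 0 = 0" and lin0D: "D 0 = 0" using lC lD by (simp_all add: linear_0)
  have g1: "P ` Gpart = Gpart"
  proof
    show "P ` Gpart \<subseteq> Gpart" unfolding P_def Gpart_def using lin0D by auto
    show "Gpart \<subseteq> P ` Gpart"
    proof
      fix w assume "w \<in> Gpart"
      then obtain a where w: "w = (a,0)" unfolding Gpart_def by auto
      obtain x where "a = C x" using sC by blast
      then have "w = P (x,0)" unfolding P_def w using lin0D by simp
      moreover have "(x,0) \<in> Gpart" unfolding Gpart_def by auto
      ultimately show "w \<in> P ` Gpart" by blast
    qed
  qed
  have g2: "P ` Gtpart = Gtpart"
  proof
    show "P ` Gtpart \<subseteq> Gtpart" unfolding P_def Gtpart_def using lin0C by auto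
    show "Gtpart \<subseteq> P ` Gtpart"
    proof
      fix w assume "w \<in> Gtpart"
      then obtain a where w: "w = (0,a)" unfolding Gtpart_def by auto
      obtain x where "a = D x" using sD by blast
      then have "w = P (0,x)" unfolding P_def w using lin0C by simp
      moreover have "(0,x) \<in> Gtpart" unfolding Gtpart_def by auto
      ultimately show "w \<in> P ` Gtpart" by blast
    qed
  qed
  show ?thesis unfolding manin_iso_def
    using linP injP surjP br fm g1 g2 by (intro exI[of _ P]) (auto intro: bijI)
qed

lemma manin_transfer:
  assumes "manin_iso f1 g1 f2 g2" "manin_triple f1 g1"
  shows "manin_triple f2 g2"
proof -
  obtain P where lP: "linear P" and bP: "bij P"
    and br: "\<forall>u v. P (dbr f1 g1 u v) = dbr f2 g2 (P u) (P v)"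
    and fm: "\<forall>u v. dform (P u) (P v) = dform u v"
    using assms(1) unfolding manin_iso_def by blast
  have a1: "\<forall>u. dbr f1 g1 u u = 0"
    and a2: "\<forall>u v w. dbr f1 g1 u (dbr f1 g1 v w) + dbr f1 g1 v (dbr f1 g1 w u) + dbr f1 g1 w (dbr f1 g1 u v) = 0"
    and a3: "\<forall>u v w. dform (dbr f1 g1 u v) w = dform u (dbr f1 g1 v w)"
    using assms(2) unfolding manin_triple_def by auto
  have sP: "\<exists>u. u' = P u" for u' using bP by (metis bij_def surj_def)
  have P0: "P 0 = 0" using lP by (simp add: linear_0)
  have c1: "dbr f2 g2 u' u' = 0" for u'
    using sP[of u'] br a1 P0 by metis
  have c2: "dbr f2 g2 u' (dbr f2 g2 v' w') + dbr f2 g2 v' (dbr f2 g2 w' u') + dbr f2 g2 w' (dbr f2 g2 u' v') = 0" for u' v' w'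
  proof -
    obtain u v w where "u' = P u" "v' = P v" "w' = P w" using sP by metis
    then have "dbr f2 g2 u' (dbr f2 g2 v' w') + dbr f2 g2 v' (dbr f2 g2 w' u') + dbr f2 g2 w' (dbr f2 g2 u' v')
       = P (dbr f1 g1 u (dbr f1 g1 v w) + dbr f1 g1 v (dbr f1 g1 w u) + dbr f1 g1 w (dbr f1 g1 u v))"
    proof -
      have br': "dbr f2 g2 (P a) (P b) = P (dbr f1 g1 a b)" for a b using br by metis
      show ?thesis using \<open>u' = P u\<close> \<open>v' = P v\<close> \<open>w' = P w\<close>
        by (simp add: br' linear_add[OF lP])
    qed
    then show ?thesis using a2 P0 by simp
  qed
  have c3: "dform (dbr f2 g2 u' v') w' = dform u' (dbr f2 g2 v' w')" for u' v' w'
  proof -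
    obtain u v w where "u' = P u" "v' = P v" "w' = P w" using sP by metis
    moreover have "dform (dbr f2 g2 (P u) (P v)) (P w) = dform (P u) (dbr f2 g2 (P v) (P w))"
    proof -
      have br': "dbr f2 g2 (P a) (P b) = P (dbr f1 g1 a b)" for a b using br by metis
      have fm': "dform (P a) (P b) = dform a b" for a b using fm by metis
      show ?thesis by (simp only: br' fm' a3)
    qed
    ultimately show ?thesis by simp
  qed
  show ?thesis unfolding manin_triple_def using c1 c2 c3 by blast
qed

lemma manin_iso_sym:
  assumes "manin_iso f1 g1 f2 g2"
  shows "manin_iso f2 g2 f1 g1"
proof -
  obtain P where lP: "linear P" and bP: "bij P"
    and br: "\<forall>u v. P (dbr f1 g1 u v) = dbr f2 g2 (P u) (P v)"
    and fm: "\<forall>u v. dform (P u) (P v) = dform u v"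
    and i1: "P ` Gpart = Gpart" and i2: "P ` Gtpart = Gtpart"
    using assms(1) unfolding manin_iso_def by blast
  define Q where "Q = inv P"
  have iP: "inj P" using bP bij_def by blast
  have lQ: "linear Q" unfolding Q_def using eucl.inj_linear_imp_inv_linear[OF lP iP] .
  have bQ: "bij Q" unfolding Q_def using bP by (simp add: bij_imp_bij_inv)
  have PQ: "P (Q u) = u" for u unfolding Q_def using bP by (simp add: bij_is_surj surj_f_inv_f)
  have QP: "Q (P u) = u" for u unfolding Q_def using iP by simp
  have brQ: "Q (dbr f2 g2 u v) = dbr f1 g1 (Q u) (Q v)" for u v
    by (metis PQ QP br)
  have fmQ: "dform (Q u) (Q v) = dform u v" for u v by (metis PQ fm)
  have j1: "Q ` Gpart = Gpart"
  proof -
    have "Q ` Gpart = Q ` P ` Gpart" using i1 by simp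
    also have "\<dots> = Gpart" using QP by (simp add: image_image)
    finally show ?thesis .
  qed
  have j2: "Q ` Gtpart = Gtpart"
  proof -
    have "Q ` Gtpart = Q ` P ` Gtpart" using i2 by simp
    also have "\<dots> = Gtpart" using QP by (simp add: image_image)
    finally show ?thesis .
  qed
  show ?thesis unfolding manin_iso_def using lQ bQ brQ fmQ j1 j2 by blast
qed

lemma manin_iso_trans:
  assumes "manin_iso f1 g1 f2 g2" "manin_iso f2 g2 f3 g3"
  shows "manin_iso f1 g1 f3 g3"
proof -
  obtain P where lP: "linear P" and bP: "bij P"
    and br: "\<forall>u v. P (dbr f1 g1 u v) = dbr f2 g2 (P u) (P v)"
    and fm: "\<forall>u v. dform (P u) (P v) = dform u v"
    and i1: "P ` Gpart = Gpart" and i2: "P ` Gtpart = Gtpart"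
    using assms(1) unfolding manin_iso_def by blast
  obtain Q where lQ: "linear Q" and bQ: "bij Q"
    and brQ: "\<forall>u v. Q (dbr f2 g2 u v) = dbr f3 g3 (Q u) (Q v)"
    and fmQ: "\<forall>u v. dform (Q u) (Q v) = dform u v"
    and j1: "Q ` Gpart = Gpart" and j2: "Q ` Gtpart = Gtpart"
    using assms(2) unfolding manin_iso_def by blast
  have "linear (Q \<circ> P)" using lP lQ by (simp add: linear_compose)
  moreover have "bij (Q \<circ> P)" using bP bQ by (simp add: bij_comp)
  moreover have "\<forall>u v. (Q \<circ> P) (dbr f1 g1 u v) = dbr f3 g3 ((Q \<circ> P) u) ((Q \<circ> P) v)"
  proof -
    have b1: "P (dbr f1 g1 u v) = dbr f2 g2 (P u) (P v)" for u v using br by blast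
    have b2: "Q (dbr f2 g2 u v) = dbr f3 g3 (Q u) (Q v)" for u v using brQ by blast
    show ?thesis by (simp add: b1 b2)
  qed
  moreover have "\<forall>u v. dform ((Q \<circ> P) u) ((Q \<circ> P) v) = dform u v"
  proof -
    have b1: "dform (P u) (P v) = dform u v" for u v using fm by blast
    have b2: "dform (Q u) (Q v) = dform u v" for u v using fmQ by blast
    show ?thesis by (simp add: b1 b2)
  qed
  moreover have "(Q \<circ> P) ` Gpart = Gpart" "(Q \<circ> P) ` Gtpart = Gtpart"
    by (simp only: image_comp[symmetric] i1 i2 j1 j2)+
  ultimately show ?thesis unfolding manin_iso_def by blast
qed


lemma n3: "(1::3) \<noteq> 2" "(1::3) \<noteq> 3" "(2::3) \<noteq> 3" "(2::3) \<noteq> 1" "(3::3) \<noteq> 1" "(3::3) \<noteq> 2"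
  by simp_all
lemmas ss = dbr_def sum_3 vec_eq_iff forall_3 axis_def f_VII0_def sc_of_def Let_def prod_eq_iff fst_add snd_add n3

definition std :: "real \<Rightarrow> real \<Rightarrow> real \<Rightarrow> real \<Rightarrow> sc" where
  "std p q r s = sc_of (vector [-q, -r, s]) (vector [0, p, q]) (vector [-p, 0, r])"

lemma classify:
  assumes "manin_triple f_VII0 g"
  shows "g = std (g 2 3 2) (g 2 3 3) (g 3 1 3) (g 1 2 3) \<and> g 2 3 2 * g 1 2 3 = 0"
proof -
  let ?d = "dbr f_VII0 g"
  have a1: "\<And>u. ?d u u = 0"
    and a2: "\<And>u v w. ?d u (?d v w) + ?d v (?d w u) + ?d w (?d u v) = 0"
    using assms unfolding manin_triple_def by auto
  have "?d (0, axis 1 1) (0, axis 1 1) = 0" by (rule a1)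
  then have d1: "g 1 1 1 = 0" "g 1 1 2 = 0" "g 1 1 3 = 0" by (simp_all add: ss)
  have "?d (0, axis 2 1) (0, axis 2 1) = 0" by (rule a1)
  then have d2: "g 2 2 1 = 0" "g 2 2 2 = 0" "g 2 2 3 = 0" by (simp_all add: ss)
  have "?d (0, axis 3 1) (0, axis 3 1) = 0" by (rule a1)
  then have d3: "g 3 3 1 = 0" "g 3 3 2 = 0" "g 3 3 3 = 0" by (simp_all add: ss)
  have "?d (0, axis 1 1 + axis 2 1) (0, axis 1 1 + axis 2 1) = 0" by (rule a1)
  then have e12: "g 2 1 1 = - g 1 2 1" "g 2 1 2 = - g 1 2 2" "g 2 1 3 = - g 1 2 3"
    using d1 d2 by (simp_all add: ss)
  have "?d (0, axis 1 1 + axis 3 1) (0, axis 1 1 + axis 3 1) = 0" by (rule a1)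
  then have e13: "g 1 3 1 = - g 3 1 1" "g 1 3 2 = - g 3 1 2" "g 1 3 3 = - g 3 1 3"
    using d1 d3 by (simp_all add: ss)
  have "?d (0, axis 2 1 + axis 3 1) (0, axis 2 1 + axis 3 1) = 0" by (rule a1)
  then have e23: "g 3 2 1 = - g 2 3 1" "g 3 2 2 = - g 2 3 2" "g 3 2 3 = - g 2 3 3"
    using d2 d3 by (simp_all add: ss)
  note E = d1 d2 d3 e12 e13 e23
  have "?d (axis 1 1, 0) (?d (axis 2 1, 0) (0, axis 1 1)) + ?d (axis 2 1, 0) (?d (0, axis 1 1) (axis 1 1, 0))
        + ?d (0, axis 1 1) (?d (axis 1 1, 0) (axis 2 1, 0)) = 0" by (rule a2)
  then have j1: "g 2 3 1 + g 3 1 2 = 0" using E by (simp add: ss)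
  have "?d (axis 1 1, 0) (?d (axis 3 1, 0) (0, axis 1 1)) + ?d (axis 3 1, 0) (?d (0, axis 1 1) (axis 1 1, 0))
        + ?d (0, axis 1 1) (?d (axis 1 1, 0) (axis 3 1, 0)) = 0" by (rule a2)
  then have j2: "g 2 3 1 - g 3 1 2 = 0 \<and> g 1 2 2 + g 3 1 3 = 0" using E by (simp add: ss)
  have "?d (axis 1 1, 0) (?d (axis 3 1, 0) (0, axis 2 1)) + ?d (axis 3 1, 0) (?d (0, axis 2 1) (axis 1 1, 0))
        + ?d (0, axis 2 1) (?d (axis 1 1, 0) (axis 3 1, 0)) = 0" by (rule a2)
  then have j3: "g 3 1 1 + g 2 3 2 = 0" using E by (simp add: ss)
  have "?d (axis 2 1, 0) (?d (axis 3 1, 0) (0, axis 1 1)) + ?d (axis 3 1, 0) (?d (0, axis 1 1) (axis 2 1, 0))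
        + ?d (0, axis 1 1) (?d (axis 2 1, 0) (axis 3 1, 0)) = 0" by (rule a2)
  then have j4: "g 1 2 1 + g 2 3 3 = 0" using E by (simp add: ss)
  have "?d (axis 3 1, 0) (?d (0, axis 1 1) (0, axis 2 1)) + ?d (0, axis 1 1) (?d (0, axis 2 1) (axis 3 1, 0))
        + ?d (0, axis 2 1) (?d (axis 3 1, 0) (0, axis 1 1)) = 0" by (rule a2)
  then have j5raw: "g 1 2 2 * g 2 3 3 + (g 1 2 3 * g 3 1 1 - g 1 2 3 * g 2 3 2 - g 1 2 1 * g 3 1 3) = 0"
    using E j1 j2 j3 j4 by (simp add: ss)
  have sub: "g 3 1 1 = - g 2 3 2" "g 1 2 2 = - g 3 1 3" "g 1 2 1 = - g 2 3 3" "g 2 3 1 = 0" "g 3 1 2 = 0"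
    using j1 j2 j3 j4 by linarith+
  have "2 * (g 2 3 2 * g 1 2 3) = 0" using j5raw unfolding sub by (simp add: algebra_simps)
  then have j5: "g 2 3 2 * g 1 2 3 = 0" by simp
  have "g = std (g 2 3 2) (g 2 3 3) (g 3 1 3) (g 1 2 3)"
  proof -
    have "\<forall>i j k. g i j k = std (g 2 3 2) (g 2 3 3) (g 3 1 3) (g 1 2 3) i j k"
      unfolding forall_3 by (simp add: std_def sc_of_def n3 E sub)
    then show ?thesis by blast
  qed
  then show ?thesis using j5 by simp
qed


definition Cm :: "real \<Rightarrow> real \<Rightarrow> real \<Rightarrow> real \<Rightarrow> real \<Rightarrow> real^3 \<Rightarrow> real^3" where
  "Cm a b \<sigma> v1 v2 x = vector [a * x$1 - \<sigma> * b * x$2 + v1 * x$3, b * x$1 + \<sigma> * a * x$2 + v2 * x$3, \<sigma> * x$3]"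

definition Dm :: "real \<Rightarrow> real \<Rightarrow> real \<Rightarrow> real \<Rightarrow> real \<Rightarrow> real^3 \<Rightarrow> real^3" where
  "Dm c d \<sigma> v1 v2 x = vector [c * x$1 - \<sigma> * d * x$2, d * x$1 + \<sigma> * c * x$2,
     - \<sigma> * (v1 * (c * x$1 - \<sigma> * d * x$2) + v2 * (d * x$1 + \<sigma> * c * x$2)) + \<sigma> * x$3]"

lemma Cm_lin: "linear (Cm a b \<sigma> v1 v2)"
  by (rule linearI) (simp_all add: Cm_def vec_eq_iff forall_3 algebra_simps)

lemma Dm_lin: "linear (Dm a b \<sigma> v1 v2)"
  by (rule linearI) (simp_all add: Dm_def vec_eq_iff forall_3 algebra_simps)

lemma CD_pair:
  assumes "\<sigma> * \<sigma> = 1" "a * c + b * d = 1" "b * c - a * d = 0"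
  shows "Cm a b \<sigma> v1 v2 x \<bullet> Dm c d \<sigma> v1 v2 y = x \<bullet> y"
  using assms unfolding Cm_def Dm_def inner_vec_def sum_3 by simp algebra

lemma Cm_aut:
  assumes "\<sigma> * \<sigma> = 1"
  shows "Cm a b \<sigma> v1 v2 (brG f_VII0 x y) = brG f_VII0 (Cm a b \<sigma> v1 v2 x) (Cm a b \<sigma> v1 v2 y)"
  using assms unfolding vec_eq_iff forall_3 by (simp add: Cm_def brG_def f_VII0_def sc_of_def sum_3 n3) algebra

lemma Dm_std:
  assumes "\<sigma> * \<sigma> = 1" "a * c + b * d = 1" "b * c - a * d = 0"
  shows "Dm c d \<sigma> v1 v2 (brG (std p q r s) x y) =
     brG (std (\<sigma> * p) (- (b * r - \<sigma> * a * q + v2 * p)) (a * r + \<sigma> * b * q + v1 * p) ((a^2+b^2) * s))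
       (Dm c d \<sigma> v1 v2 x) (Dm c d \<sigma> v1 v2 y)"
  using assms unfolding vec_eq_iff forall_3 by (simp add: Dm_def brG_def std_def sc_of_def sum_3 n3) algebra



lemma mt_jac:
  assumes "p * s = 0"
  shows "dbr f_VII0 (std p q r s) (x,xi) (dbr f_VII0 (std p q r s) (y,eta) (z,zeta)) + dbr f_VII0 (std p q r s) (y,eta) (dbr f_VII0 (std p q r s) (z,zeta) (x,xi)) + dbr f_VII0 (std p q r s) (z,zeta) (dbr f_VII0 (std p q r s) (x,xi) (y,eta)) = 0"
  using assms
  apply (simp add: Let_def dbr_def vec_eq_iff forall_3 f_VII0_def std_def sc_of_def sum_3 n3 prod_eq_iff)
  by algebra


lemma mt_alt: "dbr f_VII0 (std p q r s) u u = 0"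
  by (cases u) (simp add: dbr_def vec_eq_iff forall_3 f_VII0_def std_def sc_of_def sum_3 n3 prod_eq_iff algebra_simps)



lemma mt_inv: "dform (dbr f_VII0 (std p q r s) (x,xi) (y,eta)) (z,zeta) = dform (x,xi) (dbr f_VII0 (std p q r s) (y,eta) (z,zeta))"
  apply (simp add: dform_def inner_vec_def dbr_def f_VII0_def std_def sc_of_def sum_3 n3)
  by algebra

lemma dual_std: "dual_sc l b = std (if l = BV_ii then b else 0) 0
   (case l of BIV \<Rightarrow> b | BV_i \<Rightarrow> 1 | _ \<Rightarrow> 0) (case l of BII_i \<Rightarrow> 1 | BII_ii \<Rightarrow> -1 | BIV \<Rightarrow> b | _ \<Rightarrow> 0)"
proof -
  have "\<forall>i j k. dual_sc l b i j k = std (if l = BV_ii then b else 0) 0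
   (case l of BIV \<Rightarrow> b | BV_i \<Rightarrow> 1 | _ \<Rightarrow> 0) (case l of BII_i \<Rightarrow> 1 | BII_ii \<Rightarrow> -1 | BIV \<Rightarrow> b | _ \<Rightarrow> 0) i j k"
    unfolding forall_3 by (cases l) (simp_all add: std_def sc_of_def n3)
  then show ?thesis by blast
qed

lemma mt_std: assumes "p * s = 0" shows "manin_triple f_VII0 (std p q r s)"
  unfolding manin_triple_def
proof (intro conjI allI)
  fix u v w :: "(real^3) \<times> (real^3)"
  show "dbr f_VII0 (std p q r s) u u = 0" by (rule mt_alt)
  obtain x xi y eta z zeta where "u = (x,xi)" "v = (y,eta)" "w = (z,zeta)" by (metis surj_pair)
  then show "dbr f_VII0 (std p q r s) u (dbr f_VII0 (std p q r s) v w) + dbr f_VII0 (std p q r s) v (dbr f_VII0 (std p q r s) w u) + dbr f_VII0 (std p q r s) w (dbr f_VII0 (std p q r s) u v) = 0"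
    "dform (dbr f_VII0 (std p q r s) u v) w = dform u (dbr f_VII0 (std p q r s) v w)"
    using mt_jac[OF assms] mt_inv by simp_all
qed

lemma std_inj: assumes "std p q r s = std p' q' r' s'" shows "p = p' \<and> q = q' \<and> r = r' \<and> s = s'"
proof -
  have "std p q r s 2 3 2 = std p' q' r' s' 2 3 2" "std p q r s 2 3 3 = std p' q' r' s' 2 3 3"
    "std p q r s 3 1 3 = std p' q' r' s' 3 1 3" "std p q r s 1 2 3 = std p' q' r' s' 1 2 3"
    using assms by simp_all
  then show ?thesis by (simp add: std_def sc_of_def n3)
qed

lemma brG_axis: "brG g (axis i 1) (axis j 1) $ k = g i j k"
  using exhaust_3[of i] exhaust_3[of j] by (auto simp: brG_def axis_def sum_3 n3)

lemma vec3_exp: "(x::real^3) = x$1 *\<^sub>R axis 1 1 + x$2 *\<^sub>R axis 2 1 + x$3 *\<^sub>R axis 3 1"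
  by (simp add: vec_eq_iff forall_3 axis_def n3)

lemma brG_bilin:
  "brG g (a + b) c = brG g a c + brG g b c" "brG g (t *\<^sub>R a) c = t *\<^sub>R brG g a c"
  "brG g c (a + b) = brG g c a + brG g c b" "brG g c (t *\<^sub>R a) = t *\<^sub>R brG g c a"
  by (simp_all add: brG_def vec_eq_iff sum_3 algebra_simps)

lemma brG_expand: "brG g x y = (\<Sum>i\<in>UNIV. \<Sum>j\<in>UNIV. (x$i * y$j) *\<^sub>R (\<chi> k. g i j k))"
  by (simp add: brG_def vec_eq_iff sum_component)

lemma brG_rep:
  assumes lD: "linear D" and lE: "linear E"
  shows "brG (\<lambda>i j k. D (brG g (E (axis i 1)) (E (axis j 1))) $ k) x y = D (brG g (E x) (E y))"
proof -
  have "D (brG g (E x) (E y)) = D (brG g (E (x$1 *\<^sub>R axis 1 1 + x$2 *\<^sub>R axis 2 1 + x$3 *\<^sub>R axis 3 1))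
     (E (y$1 *\<^sub>R axis 1 1 + y$2 *\<^sub>R axis 2 1 + y$3 *\<^sub>R axis 3 1)))"
    using vec3_exp[of x] vec3_exp[of y] by simp
  also have "\<dots> = (\<Sum>i\<in>UNIV. \<Sum>j\<in>UNIV. (x$i * y$j) *\<^sub>R D (brG g (E (axis i 1)) (E (axis j 1))))"
    by (simp add: linear_add[OF lE] linear_scale[OF lE] brG_bilin linear_add[OF lD] linear_scale[OF lD] sum_3 algebra_simps)
  finally show ?thesis by (simp add: brG_expand)
qed

lemma aut_iso:
  assumes "\<sigma> * \<sigma> = 1" "a * c + b * d = 1" "b * c - a * d = 0"
  shows "manin_iso f_VII0 (std p q r s) f_VII0
     (std (\<sigma> * p) (- (b * r - \<sigma> * a * q + v2 * p)) (a * r + \<sigma> * b * q + v1 * p) ((a^2+b^2) * s))"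
  by (rule iso_CD[OF Cm_lin Dm_lin]) (use assms CD_pair Cm_aut Dm_std in auto)



lemma nf_step:
  assumes "\<sigma> * \<sigma> = 1" "a * c + b * d = 1" "b * c - a * d = 0"
    and "std (\<sigma> * p) (- (b * r - \<sigma> * a * q + vy * p)) (a * r + \<sigma> * b * q + vx * p) ((a^2+b^2) * s) = dual_sc l \<beta>"
    and "valid_param l \<beta>"
  shows "\<exists>l \<beta>. valid_param l \<beta> \<and> manin_iso f_VII0 (std p q r s) f_VII0 (dual_sc l \<beta>)"
  using aut_iso[OF assms(1-3), of p q r s vy vx] assms(4,5) by metis

lemma nf_exist:
  assumes ps: "p * s = 0"
  shows "\<exists>l \<beta>. valid_param l \<beta> \<and> manin_iso f_VII0 (std p q r s) f_VII0 (dual_sc l \<beta>)"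
proof (cases "p = 0")
  case False
  then have s0: "s = 0" using ps by simp
  show ?thesis
  proof (cases "p > 0")
    case True
    show ?thesis
      by (rule nf_step[where \<sigma>=1 and a=1 and b=0 and c=1 and d=0 and vx="-r/p" and vy="q/p" and l=BV_ii and \<beta>=p])
        (use True s0 in \<open>simp_all add: dual_std\<close>)
  next
    case False
    with \<open>p \<noteq> 0\<close> have "p < 0" by simp
    show ?thesis
      by (rule nf_step[where \<sigma>="-1" and a=1 and b=0 and c=1 and d=0 and vx="-r/p" and vy="-q/p" and l=BV_ii and \<beta>="-p"])
        (use \<open>p < 0\<close> s0 in \<open>simp_all add: dual_std\<close>)
  qed
next
  case p0: True
  show ?thesis
  proof (cases "r = 0 \<and> q = 0")
    case True
    then have r0: "r = 0" and q0: "q = 0" by auto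
    consider "s = 0" | "s > 0" | "s < 0" by linarith
    then show ?thesis
    proof cases
      case 1
      show ?thesis
        by (rule nf_step[where \<sigma>=1 and a=1 and b=0 and c=1 and d=0 and vx=0 and vy=0 and l=BI and \<beta>=0])
          (use p0 r0 q0 1 in \<open>simp_all add: dual_std\<close>)
    next
      case 2
      show ?thesis
        by (rule nf_step[where \<sigma>=1 and a="1/sqrt s" and b=0 and c="sqrt s" and d=0 and vx=0 and vy=0 and l=BII_i and \<beta>=0])
          (use p0 r0 q0 2 in \<open>simp_all add: dual_std power_divide\<close>)
    next
      case 3
      show ?thesis
        by (rule nf_step[where \<sigma>=1 and a="1/sqrt (-s)" and b=0 and c="sqrt (-s)" and d=0 and vx=0 and vy=0 and l=BII_ii and \<beta>=0])
          (use p0 r0 q0 3 in \<open>simp_all add: dual_std power_divide\<close>)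
    qed
  next
    case False
    define M where "M = r^2 + q^2"
    have M: "M > 0" unfolding M_def using False by (auto simp: sum_power2_gt_zero_iff)
    have M': "q * q + r * r \<noteq> 0" using M unfolding M_def power2_eq_square by linarith
    have e: "q * q / (q * q + r * r) + r * r / (q * q + r * r) = 1"
      using M' by (simp add: add_divide_distrib[symmetric])
    have qr: "q = 0 \<longrightarrow> r \<noteq> 0" using False by auto
    show ?thesis
    proof (cases "s = 0")
      case True
      show ?thesis
        by (rule nf_step[where \<sigma>=1 and a="r/M" and b="q/M" and c=r and d=q and vx=0 and vy=0 and l=BV_i and \<beta>=0])
          (use p0 True M e qr in \<open>simp_all add: dual_std field_simps M_def power2_eq_square\<close>)
    next
      case False
      have "(q * (q * s) + r * (r * s)) = (q * q + r * r) * s" by (simp add: algebra_simps)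
      then have e2: "(q * (q * s) + r * (r * s)) / (s * s) = (q * q + r * r) / s"
        using False by simp
      show ?thesis
        apply (rule nf_step[where \<sigma>=1 and a="r/s" and b="q/s" and c="r * s / M" and d="q * s / M" and vx=0 and vy=0 and l=BIV and \<beta>="M / s"])
        using p0 False M e qr apply (simp_all add: dual_std field_simps M_def power2_eq_square)
        using e2 by simp
    qed
  qed
qed



lemma dbr_GG: "dbr f g (x,0) (y,0) = (brG f x y, 0)"
  by (simp add: dbr_def brG_def vec_eq_iff)
lemma dbr_TT: "dbr f g (0,x) (0,y) = (0, brG g x y)"
  by (simp add: dbr_def brG_def vec_eq_iff)

lemma brG_f0: "brG f_VII0 u v = vector [u$2 * v$3 - u$3 * v$2, u$3 * v$1 - u$1 * v$3, 0]"
  by (simp add: brG_def vec_eq_iff forall_3 f_VII0_def sc_of_def sum_3 n3)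

lemma iso_rel:
  assumes "manin_iso f_VII0 (std p1 q1 r1 s1) f_VII0 (std p2 q2 r2 s2)"
  shows "\<exists>a b \<sigma> vx vy. \<sigma> * \<sigma> = 1 \<and> a^2 + b^2 > 0 \<and> p2 = \<sigma> * p1 \<and>
     q2 = - (b * r1 - \<sigma> * a * q1 + vy * p1) \<and> r2 = a * r1 + \<sigma> * b * q1 + vx * p1 \<and> s2 = (a^2+b^2) * s1"
proof -
  let ?g1 = "std p1 q1 r1 s1" and ?g2 = "std p2 q2 r2 s2"
  obtain P where lP: "linear P" and bP: "bij P"
    and br: "\<forall>u v. P (dbr f_VII0 ?g1 u v) = dbr f_VII0 ?g2 (P u) (P v)"
    and fm: "\<forall>u v. dform (P u) (P v) = dform u v"
    and i1: "P ` Gpart = Gpart" and i2: "P ` Gtpart = Gtpart"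
    using assms unfolding manin_iso_def by blast
  define C where "C x = fst (P (x,0))" for x
  define D where "D y = snd (P (0,y))" for y
  have sC0: "snd (P (x,0)) = 0" for x
  proof -
    have "(x,0) \<in> Gpart" unfolding Gpart_def by auto
    then have "P (x,0) \<in> Gpart" using i1 by blast
    then show ?thesis unfolding Gpart_def by auto
  qed
  have fD0: "fst (P (0,y)) = 0" for y
  proof -
    have "(0,y) \<in> Gtpart" unfolding Gtpart_def by auto
    then have "P (0,y) \<in> Gtpart" using i2 by blast
    then show ?thesis unfolding Gtpart_def by auto
  qed
  have Pd: "P (x,y) = (C x, D y)" for x y
  proof -
    have "P (x,y) = P ((x,0) + (0,y))" by simp
    also have "\<dots> = P (x,0) + P (0,y)" by (rule linear_add[OF lP])
    finally show ?thesis unfolding C_def D_def using sC0 fD0 by (simp add: prod_eq_iff)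
  qed
  have lC: "linear C"
  proof (rule linearI)
    fix x y :: "real^3" and t :: real
    have "P ((x,0) + (y,0)) = P (x,0) + P (y,0)" by (rule linear_add[OF lP])
    then have "P (x + y, 0) = P (x,0) + P (y,0)" by simp
    then show "C (x + y) = C x + C y" unfolding C_def by simp
    have "P (t *\<^sub>R (x,0)) = t *\<^sub>R P (x,0)" by (rule linear_scale[OF lP])
    then have "P (t *\<^sub>R x, 0) = t *\<^sub>R P (x,0)" by simp
    then show "C (t *\<^sub>R x) = t *\<^sub>R C x" unfolding C_def by simp
  qed
  have lD: "linear D"
  proof (rule linearI)
    fix x y :: "real^3" and t :: real
    have "P ((0,x) + (0,y)) = P (0,x) + P (0,y)" by (rule linear_add[OF lP])
    then have "P (0, x + y) = P (0,x) + P (0,y)" by simp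
    then show "D (x + y) = D x + D y" unfolding D_def by simp
    have "P (t *\<^sub>R (0,x)) = t *\<^sub>R P (0,x)" by (rule linear_scale[OF lP])
    then have "P (0, t *\<^sub>R x) = t *\<^sub>R P (0,x)" by simp
    then show "D (t *\<^sub>R x) = t *\<^sub>R D x" unfolding D_def by simp
  qed
  have C00: "C 0 = 0" and D00: "D 0 = 0" using lC lD by (simp_all add: linear_0)
  have pr: "\<forall>x y. C x \<bullet> D y = x \<bullet> y"
  proof (intro allI)
    fix x y
    have "dform (P (x,0)) (P (0,y)) = dform (x,0) (0,y)" using fm by blast
    then show "C x \<bullet> D y = x \<bullet> y" unfolding Pd dform_def using C00 D00 by simp
  qed
  have hC: "C (brG f_VII0 x y) = brG f_VII0 (C x) (C y)" for x y
  proof -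
    have "P (dbr f_VII0 ?g1 (x,0) (y,0)) = dbr f_VII0 ?g2 (P (x,0)) (P (y,0))" using br by blast
    then show ?thesis unfolding Pd dbr_GG D00 by simp
  qed
  have hD: "D (brG ?g1 x y) = brG ?g2 (D x) (D y)" for x y
  proof -
    have "P (dbr f_VII0 ?g1 (0,x) (0,y)) = dbr f_VII0 ?g2 (P (0,x)) (P (0,y))" using br by blast
    then show ?thesis unfolding Pd dbr_TT C00 by simp
  qed
  have iC: "inj C" using pair_inj1[OF pr] .
  have iD: "inj D" using pair_inj2[OF pr] .
  have sC: "surj C" using lin_surj[OF lC iC] .
  have sD: "surj D" using lin_surj[OF lD iD] .
  define a where "a = C (axis 1 1) $ 1"
  define b where "b = C (axis 1 1) $ 2"
  define \<sigma> where "\<sigma> = C (axis 3 1) $ 3"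
  define vx where "vx = C (axis 3 1) $ 1"
  define vy where "vy = C (axis 3 1) $ 2"
  have Cexp: "C x = x$1 *\<^sub>R C (axis 1 1) + x$2 *\<^sub>R C (axis 2 1) + x$3 *\<^sub>R C (axis 3 1)" for x
    by (subst vec3_exp[of x]) (simp add: linear_add[OF lC] linear_scale[OF lC])
  have ax: "brG f_VII0 (axis 2 1) (axis 3 1) = axis 1 1" "brG f_VII0 (axis 3 1) (axis 1 1) = axis 2 1"
    "brG f_VII0 (axis 1 1) (axis 2 1) = 0"
    by (simp_all add: brG_f0 axis_def vec_eq_iff forall_3 n3)
  define c where "c i j = C (axis j 1) $ i" for i j
  have e1: "C (axis 1 1) = brG f_VII0 (C (axis 2 1)) (C (axis 3 1))" using hC[of "axis 2 1" "axis 3 1"] ax by simp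
  have e2: "C (axis 2 1) = brG f_VII0 (C (axis 3 1)) (C (axis 1 1))" using hC[of "axis 3 1" "axis 1 1"] ax by simp
  have e3: "C 0 = brG f_VII0 (C (axis 1 1)) (C (axis 2 1))" using hC[of "axis 1 1" "axis 2 1"] ax by simp
  have r1: "c 1 1 = c 2 2 * c 3 3 - c 3 2 * c 2 3" "c 2 1 = c 3 2 * c 1 3 - c 1 2 * c 3 3" "c 3 1 = 0"
    using arg_cong[OF e1, of "\<lambda>v. v $ 1"] arg_cong[OF e1, of "\<lambda>v. v $ 2"] arg_cong[OF e1, of "\<lambda>v. v $ 3"]
    unfolding c_def by (simp_all add: brG_f0)
  have r2: "c 1 2 = c 2 3 * c 3 1 - c 3 3 * c 2 1" "c 2 2 = c 3 3 * c 1 1 - c 1 3 * c 3 1" "c 3 2 = 0"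
    using arg_cong[OF e2, of "\<lambda>v. v $ 1"] arg_cong[OF e2, of "\<lambda>v. v $ 2"] arg_cong[OF e2, of "\<lambda>v. v $ 3"]
    unfolding c_def by (simp_all add: brG_f0)
  have ne: "C (axis 1 1) \<noteq> 0"
  proof
    assume "C (axis 1 1) = 0"
    then have "C (axis 1 1) = C 0" using C00 by simp
    then have "axis 1 1 = (0::real^3)" using iC by (simp add: inj_eq)
    then show False by (simp add: axis_eq_0_iff)
  qed
  have "c 1 1 \<noteq> 0 \<or> c 2 1 \<noteq> 0"
  proof (rule ccontr)
    assume "\<not> (c 1 1 \<noteq> 0 \<or> c 2 1 \<noteq> 0)"
    then have "C (axis 1 1) = 0" using r1(3) unfolding c_def by (simp add: vec_eq_iff forall_3)
    then show False using ne by simp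
  qed
  moreover have "c 1 1 = (c 3 3 * c 3 3) * c 1 1" "c 2 1 = (c 3 3 * c 3 3) * c 2 1"
    using r1 r2 by (simp_all add: algebra_simps)
  ultimately have sig: "c 3 3 * c 3 3 = 1" by auto
  have CCm: "C x = Cm a b \<sigma> vx vy x" for x
  proof -
    have "c 1 2 = - \<sigma> * b" "c 2 2 = \<sigma> * a" "c 3 1 = 0" "c 3 2 = 0"
      using r1 r2 unfolding a_def b_def \<sigma>_def c_def by simp_all
    then show ?thesis
      unfolding vec_eq_iff forall_3 using Cexp[of x]
      by (simp add: Cm_def c_def a_def b_def \<sigma>_def vx_def vy_def algebra_simps)
  qed
  have Npos: "a^2 + b^2 > 0"
    using \<open>c 1 1 \<noteq> 0 \<or> c 2 1 \<noteq> 0\<close> unfolding a_def b_def c_def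
    by (auto simp: sum_power2_gt_zero_iff)
  define cc where "cc = a / (a^2 + b^2)"
  define dd where "dd = b / (a^2 + b^2)"
  have sg: "\<sigma> * \<sigma> = 1" using sig unfolding \<sigma>_def c_def .
  have ab: "a = 0 \<longrightarrow> b \<noteq> 0" using Npos by auto
  have rel1: "a * cc + b * dd = 1" unfolding cc_def dd_def using Npos ab
    by (simp add: add_divide_distrib[symmetric] power2_eq_square)
  have rel2: "b * cc - a * dd = 0" unfolding cc_def dd_def by (simp add: algebra_simps)
  have DDm: "D y = Dm cc dd \<sigma> vx vy y" for y
  proof -
    have "\<forall>z. z \<bullet> D y = z \<bullet> Dm cc dd \<sigma> vx vy y"
    proof
      fix z
      obtain x where "z = C x" using sC by blast
      then show "z \<bullet> D y = z \<bullet> Dm cc dd \<sigma> vx vy y"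
        using pr CD_pair[OF sg rel1 rel2] CCm by simp
    qed
    then show ?thesis using vector_eq_ldot by blast
  qed
  let ?g1' = "std (\<sigma> * p1) (- (b * r1 - \<sigma> * a * q1 + vy * p1)) (a * r1 + \<sigma> * b * q1 + vx * p1) ((a^2+b^2) * s1)"
  have "brG ?g2 u v = brG ?g1' u v" for u v
  proof -
    obtain x where x: "u = D x" using sD by blast
    obtain y where y: "v = D y" using sD by blast
    have "brG ?g2 u v = D (brG ?g1 x y)" using hD x y by simp
    also have "\<dots> = brG ?g1' u v" unfolding DDm x y by (rule Dm_std[OF sg rel1 rel2])
    finally show ?thesis .
  qed
  then have "?g2 = ?g1'" using brG_axis by (metis ext)
  then have "p2 = \<sigma> * p1 \<and> q2 = - (b * r1 - \<sigma> * a * q1 + vy * p1) \<and> r2 = a * r1 + \<sigma> * b * q1 + vx * p1 \<and> s2 = (a^2+b^2) * s1"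
    by (rule std_inj)
  then show ?thesis using sg Npos by blast
qed



lemma uniq:
  assumes v1: "valid_param l1 b1" and v2: "valid_param l2 b2"
    and iso: "manin_iso f_VII0 (dual_sc l1 b1) f_VII0 (dual_sc l2 b2)"
  shows "l1 = l2 \<and> b1 = b2"
proof -
  obtain a b \<sigma> vx vy where sg: "\<sigma> * \<sigma> = 1" and N: "a^2 + b^2 > 0"
    and hp: "(if l2 = BV_ii then b2 else 0) = \<sigma> * (if l1 = BV_ii then b1 else 0)"
    and hq: "0 = - (b * (case l1 of BIV \<Rightarrow> b1 | BV_i \<Rightarrow> 1 | _ \<Rightarrow> 0) - \<sigma> * a * 0 + vy * (if l1 = BV_ii then b1 else 0))"
    and hr: "(case l2 of BIV \<Rightarrow> b2 | BV_i \<Rightarrow> 1 | _ \<Rightarrow> 0) = a * (case l1 of BIV \<Rightarrow> b1 | BV_i \<Rightarrow> 1 | _ \<Rightarrow> 0) + \<sigma> * b * 0 + vx * (if l1 = BV_ii then b1 else 0)"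
    and hs: "(case l2 of BII_i \<Rightarrow> 1 | BII_ii \<Rightarrow> -1 | BIV \<Rightarrow> b2 | _ \<Rightarrow> 0) = (a^2+b^2) * (case l1 of BII_i \<Rightarrow> 1 | BII_ii \<Rightarrow> -1 | BIV \<Rightarrow> b1 | _ \<Rightarrow> 0)"
    using iso_rel[OF iso[unfolded dual_std]] by blast
  have s1: "\<sigma> = 1 \<or> \<sigma> = -1" using sg by algebra
  show ?thesis
  proof (cases l1)
    case BI
    then show ?thesis using v1 v2 hp hr hs by (cases l2) auto
  next
    case BII_i
    then show ?thesis using v1 v2 hp hr hs N by (cases l2) auto
  next
    case BII_ii
    then show ?thesis using v1 v2 hp hr hs N by (cases l2) auto
  next
    case BIV
    then have b0: "b = 0" using hq v1 by simp
    then have a0: "a \<noteq> 0" using N by auto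
    show ?thesis
    proof (cases l2)
      case BIV
      with \<open>l1 = BIV\<close> have "b2 = a * b1" "b2 = a^2 * b1" using hr hs b0 by simp_all
      then have "a * b1 * (a - 1) = 0" by (simp add: algebra_simps power2_eq_square)
      then have "a = 1" using a0 v1 \<open>l1 = BIV\<close> by simp
      then show ?thesis using \<open>b2 = a * b1\<close> \<open>l1 = BIV\<close> BIV by simp
    qed (use \<open>l1 = BIV\<close> v1 v2 hp hr hs a0 b0 in auto)
  next
    case BV_i
    then have b0: "b = 0" using hq by simp
    then have a0: "a \<noteq> 0" using N by auto
    show ?thesis using BV_i v1 v2 hp hr hs a0 b0 by (cases l2) auto
  next
    case BV_ii
    then show ?thesis using v1 v2 hp s1 by (cases l2) auto
  qed
qed


theorem mainTheorem4:
  shows "(\<forall>l b. valid_param l b \<longrightarrow> manin_triple f_VII0 (dual_sc l b)) \<and>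
         (\<forall>f ft. manin_triple f ft \<and> lie_iso f f_VII0 \<longrightarrow>
            (\<exists>!(l, b). valid_param l b \<and> manin_iso f ft f_VII0 (dual_sc l b)))"
proof (intro conjI allI impI)
  fix l b assume "valid_param l b"
  then show "manin_triple f_VII0 (dual_sc l b)"
    by (cases l) (simp_all add: dual_std mt_std)
next
  fix f ft assume H: "manin_triple f ft \<and> lie_iso f f_VII0"
  then have mt: "manin_triple f ft" by blast
  obtain \<phi> :: "real^3 \<Rightarrow> real^3" where l\<phi>: "linear \<phi>" and b\<phi>: "bij \<phi>"
    and h\<phi>: "\<forall>x y. \<phi> (brG f x y) = brG f_VII0 (\<phi> x) (\<phi> y)"
    using H unfolding lie_iso_def by blast
  have i\<phi>: "inj \<phi>" using b\<phi> bij_def by blast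
  define \<psi> where "\<psi> = inv \<phi>"
  have l\<psi>: "linear \<psi>" unfolding \<psi>_def using eucl.inj_linear_imp_inv_linear[OF l\<phi> i\<phi>] .
  define D1 where "D1 = adjoint \<psi>"
  have lD1: "linear D1" unfolding D1_def by (rule adjoint_linear[OF l\<psi>])
  have pr: "\<forall>x y. \<phi> x \<bullet> D1 y = x \<bullet> y"
  proof (intro allI)
    fix x y
    have "\<phi> x \<bullet> D1 y = \<psi> (\<phi> x) \<bullet> y" unfolding D1_def by (rule adjoint_works[OF l\<psi>])
    also have "\<dots> = x \<bullet> y" unfolding \<psi>_def using i\<phi> by simp
    finally show "\<phi> x \<bullet> D1 y = x \<bullet> y" .
  qed
  have iD1: "inj D1" using pair_inj2[OF pr] .
  define E where "E = inv D1"
  have lE: "linear E" unfolding E_def using eucl.inj_linear_imp_inv_linear[OF lD1 iD1] .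
  have ED: "E (D1 x) = x" for x unfolding E_def using iD1 by simp
  define ft1 where "ft1 = (\<lambda>i j k. D1 (brG ft (E (axis i 1)) (E (axis j 1))) $ k)"
  have hg: "\<forall>x y. D1 (brG ft x y) = brG ft1 (D1 x) (D1 y)"
    unfolding ft1_def brG_rep[OF lD1 lE] ED by simp
  have iso1: "manin_iso f ft f_VII0 ft1" by (rule iso_CD[OF l\<phi> lD1 pr h\<phi> hg])
  have mt1: "manin_triple f_VII0 ft1" by (rule manin_transfer[OF iso1 mt])
  obtain p q r s where ft1e: "ft1 = std p q r s" and ps: "p * s = 0"
    using classify[OF mt1] by blast
  obtain l0 \<beta>0 where v0: "valid_param l0 \<beta>0" and iso2: "manin_iso f_VII0 (std p q r s) f_VII0 (dual_sc l0 \<beta>0)"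
    using nf_exist[OF ps] by blast
  have iso3: "manin_iso f ft f_VII0 (dual_sc l0 \<beta>0)"
    using manin_iso_trans[OF iso1[unfolded ft1e] iso2] .
  show "\<exists>!(l, b). valid_param l b \<and> manin_iso f ft f_VII0 (dual_sc l b)"
  proof (rule ex1I[of _ "(l0, \<beta>0)"])
    show "case (l0, \<beta>0) of (l, b) \<Rightarrow> valid_param l b \<and> manin_iso f ft f_VII0 (dual_sc l b)"
      using v0 iso3 by simp
  next
    fix y assume "case y of (l, b) \<Rightarrow> valid_param l b \<and> manin_iso f ft f_VII0 (dual_sc l b)"
    then obtain l b where y: "y = (l, b)" and v: "valid_param l b" and i: "manin_iso f ft f_VII0 (dual_sc l b)"
      by (cases y) auto
    have "manin_iso f_VII0 (dual_sc l0 \<beta>0) f_VII0 (dual_sc l b)"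
      using manin_iso_trans[OF manin_iso_sym[OF iso3] i] .
    then have "l0 = l \<and> \<beta>0 = b" using uniq[OF v0 v] by blast
    then show "y = (l0, \<beta>0)" using y by simp
  qed
qed

end
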